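(* Let $\mathcal U=(V,\tilde V,W,\tilde W,R)$ be an ordered gradient space, let $\psi_1,\psi_2\in B_+$, and set $\Omega'(\psi_1,\psi_2)=\{v\in V:0\le v\le\psi_1\text{ and }v\le\psi_2\}$. Then there exists a unique $u\in\Omega'(\psi_1,\psi_2)$ such that $\|\max(\psi_1,\psi_2)-u\|_V=\inf_{v\in\Omega'(\psi_1,\psi_2)}\|\max(\psi_1,\psi_2)-v\|_V$.
   Context: A gradient space $\mathcal U=(V,\tilde V,W,\tilde W,R)$ consists of vector spaces $\tilde V,\tilde W$ over $\mathbf R$ or $\mathbf C$, a relation $R\subseteq\tilde V\times\tilde W$ closed under addition and under multiplication by positive scalars, and linear subspaces $V\subseteq\tilde V$, $W\subseteq\tilde W$ such that $V$ is a reflexive Banach space (norm $\|\cdot\|_V$), $W$ is a reflexive strictly convex Banach space, for every $(u,g)\in R\cap(V\times W)$ there is $g'\in W$ with $(-u,g')\in R$, and $R\cap(V\times W)$ is closed in $V\times W$. A linear preorder on $\tilde V$ is a relation $\le$ with: $a\le a$; $a\le b,\ b\le c\Rightarrow a\le c$; $b\le c\Rightarrow a+b\le a+c$; $a\le b,\ \alpha\in[0,\infty)\Rightarrow\alpha a\le\alpha b$. A preordered gradient space is a gradient space with a linear preorder $\le$ on $\tilde V$ such that if $u_i\in V$, $\psi\in\tilde V$, $u_i\le\psi$ for all $i$ and $u_i\to u$ in $V$, then $u\le\psi$. An ordered gradient space is a preordered gradient space such that $V$ is strictly convex and, for $u,v\in V$, $0\le u\le v$ implies $\|u\|_V\le\|v\|_V$.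 Define $B_+=\{\psi\in\tilde V:0\le\psi\le u\text{ for some }u\in V\}$. For $\psi_1,\psi_2\in B_+$, $\max(\psi_1,\psi_2)$ denotes the unique element $u$ of $\Omega(\psi_1,\psi_2)=\{u\in V:u\ge\psi_1,\ u\ge\psi_2\}$ minimizing $\|u\|_V$ over $\Omega(\psi_1,\psi_2)$ (it exists and is unique). *)

theory Defs
  imports "HOL-Analysis.Analysis"
begin

definition reflexive_space :: "'a::banach itself \<Rightarrow> bool" where
  "reflexive_space _ \<longleftrightarrow>
     (\<forall>\<Phi> :: ('a \<Rightarrow>\<^sub>L real) \<Rightarrow>\<^sub>L real. \<exists>x::'a. \<forall>f. blinfun_apply \<Phi> f = blinfun_apply f x)"

definition strictly_convex_space :: "'a::real_normed_vector itself \<Rightarrow> bool" where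
  "strictly_convex_space _ \<longleftrightarrow>
     (\<forall>x y::'a. norm x = 1 \<and> norm y = 1 \<and> x \<noteq> y \<longrightarrow> norm ((1/2) *\<^sub>R (x + y)) < 1)"

text \<open>Gradient space: V and W are Banach space types embedded linearly and injectively
(maps iV, iW) into the ambient vector spaces Vt, Wt; R is a relation on Vt x Wt.\<close>
definition gradient_space ::
  "('v::banach \<Rightarrow> 'vt::real_vector) \<Rightarrow> ('w::banach \<Rightarrow> 'wt::real_vector) \<Rightarrow> ('vt \<times> 'wt) set \<Rightarrow> bool" where
  "gradient_space iV iW R \<longleftrightarrow>
     linear iV \<and> inj iV \<and> linear iW \<and> inj iW \<and>
     (\<forall>a b c d. (a, b) \<in> R \<and> (c, d) \<in> R \<longrightarrow> (a + c, b + d) \<in> R) \<and>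
     (\<forall>a b (\<alpha>::real). (a, b) \<in> R \<and> \<alpha> > 0 \<longrightarrow> (\<alpha> *\<^sub>R a, \<alpha> *\<^sub>R b) \<in> R) \<and>
     reflexive_space TYPE('v) \<and>
     reflexive_space TYPE('w) \<and> strictly_convex_space TYPE('w) \<and>
     (\<forall>u g. (iV u, iW g) \<in> R \<longrightarrow> (\<exists>g'. (iV (- u), iW g') \<in> R)) \<and>
     closed {(u, g). (iV u, iW g) \<in> R}"

definition linear_preorder :: "('vt::real_vector \<Rightarrow> 'vt \<Rightarrow> bool) \<Rightarrow> bool" where
  "linear_preorder le \<longleftrightarrow>
     (\<forall>a. le a a) \<and>
     (\<forall>a b c. le a b \<and> le b c \<longrightarrow> le a c) \<and>
     (\<forall>a b c. le b c \<longrightarrow> le (a + b) (a + c)) \<and>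
     (\<forall>a b (\<alpha>::real). le a b \<and> \<alpha> \<ge> 0 \<longrightarrow> le (\<alpha> *\<^sub>R a) (\<alpha> *\<^sub>R b))"

definition preordered_gradient_space ::
  "('v::banach \<Rightarrow> 'vt::real_vector) \<Rightarrow> ('w::banach \<Rightarrow> 'wt::real_vector) \<Rightarrow> ('vt \<times> 'wt) set
    \<Rightarrow> ('vt \<Rightarrow> 'vt \<Rightarrow> bool) \<Rightarrow> bool" where
  "preordered_gradient_space iV iW R le \<longleftrightarrow>
     gradient_space iV iW R \<and> linear_preorder le \<and>
     (\<forall>(u::nat \<Rightarrow> 'v) x \<psi>. (\<forall>i. le (iV (u i)) \<psi>) \<and> u \<longlonglongrightarrow> x \<longrightarrow> le (iV x) \<psi>)"

definition ordered_gradient_space ::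
  "('v::banach \<Rightarrow> 'vt::real_vector) \<Rightarrow> ('w::banach \<Rightarrow> 'wt::real_vector) \<Rightarrow> ('vt \<times> 'wt) set
    \<Rightarrow> ('vt \<Rightarrow> 'vt \<Rightarrow> bool) \<Rightarrow> bool" where
  "ordered_gradient_space iV iW R le \<longleftrightarrow>
     preordered_gradient_space iV iW R le \<and> strictly_convex_space TYPE('v) \<and>
     (\<forall>u v. le 0 (iV u) \<and> le (iV u) (iV v) \<longrightarrow> norm u \<le> norm v)"

definition B_plus :: "('v \<Rightarrow> 'vt::real_vector) \<Rightarrow> ('vt \<Rightarrow> 'vt \<Rightarrow> bool) \<Rightarrow> 'vt set" where
  "B_plus iV le = {\<psi>. le 0 \<psi> \<and> (\<exists>u. le \<psi> (iV u))}"

definition Omega_up :: "('v \<Rightarrow> 'vt) \<Rightarrow> ('vt \<Rightarrow> 'vt \<Rightarrow> bool) \<Rightarrow> 'vt \<Rightarrow> 'vt \<Rightarrow> 'v set" where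
  "Omega_up iV le \<psi>1 \<psi>2 = {u. le \<psi>1 (iV u) \<and> le \<psi>2 (iV u)}"

text \<open>max(psi1,psi2): the (unique) element of least norm of Omega(psi1,psi2).\<close>
definition gmax :: "('v::real_normed_vector \<Rightarrow> 'vt) \<Rightarrow> ('vt \<Rightarrow> 'vt \<Rightarrow> bool) \<Rightarrow> 'vt \<Rightarrow> 'vt \<Rightarrow> 'v" where
  "gmax iV le \<psi>1 \<psi>2 =
     (THE u. u \<in> Omega_up iV le \<psi>1 \<psi>2 \<and> (\<forall>v \<in> Omega_up iV le \<psi>1 \<psi>2. norm u \<le> norm v))"

definition Omega_down :: "('v \<Rightarrow> 'vt::zero) \<Rightarrow> ('vt \<Rightarrow> 'vt \<Rightarrow> bool) \<Rightarrow> 'vt \<Rightarrow> 'vt \<Rightarrow> 'v set" where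
  "Omega_down iV le \<psi>1 \<psi>2 = {v. le 0 (iV v) \<and> le (iV v) \<psi>1 \<and> le (iV v) \<psi>2}"

end

theory Submission
  imports Defs
begin

definition sublin :: "('a::real_vector \<Rightarrow> real) \<Rightarrow> bool" where
  "sublin p \<longleftrightarrow> (\<forall>x y. p (x + y) \<le> p x + p y) \<and> (\<forall>c>0. \<forall>x. p (c *\<^sub>R x) = c * p x)"

lemma sublin_add: "sublin p \<Longrightarrow> p (x + y) \<le> p x + p y"
  unfolding sublin_def by blast

lemma sublin_scale: "sublin p \<Longrightarrow> c > 0 \<Longrightarrow> p (c *\<^sub>R x) = c * p x"
  unfolding sublin_def by blast

lemma sublin_0: "sublin p \<Longrightarrow> p 0 = 0"
proof -
  assume s: "sublin p"
  have "p ((2::real) *\<^sub>R 0) = 2 * p 0" by (rule sublin_scale[OF s]) simp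
  thus "p 0 = 0" by simp
qed

lemma sublin_neg: "sublin p \<Longrightarrow> - p (- x) \<le> p x"
proof -
  assume s: "sublin p"
  have "p (x + - x) \<le> p x + p (-x)" using s unfolding sublin_def by blast
  thus ?thesis using sublin_0[OF s] by simp
qed

definition shiftf :: "('a::real_vector \<Rightarrow> real) \<Rightarrow> 'a \<Rightarrow> 'a \<Rightarrow> real" where
  "shiftf q z y = (INF t\<in>{0..}. q (y + t *\<^sub>R z) - t * q z)"

lemma shiftf_bdd:
  assumes s: "sublin q"
  shows "bdd_below ((\<lambda>t. q (y + t *\<^sub>R z) - t * q z) ` {0..})"
proof (rule bdd_belowI2[where m="- q (- y)"])
  fix t :: real assume t: "t \<in> {0..}"
  have "q ((y + t *\<^sub>R z) + (-y)) \<le> q (y + t *\<^sub>R z) + q (-y)"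
    by (rule sublin_add[OF s])
  hence "q (t *\<^sub>R z) \<le> q (y + t *\<^sub>R z) + q (-y)" by simp
  moreover have "q (t *\<^sub>R z) = t * q z"
  proof (cases "t = 0")
    case True thus ?thesis using sublin_0[OF s] by simp
  next
    case False thus ?thesis using s t unfolding sublin_def by auto
  qed
  ultimately show "- q (- y) \<le> q (y + t *\<^sub>R z) - t * q z" by linarith
qed

lemma shiftf_le: "sublin q \<Longrightarrow> t \<ge> 0 \<Longrightarrow> shiftf q z y \<le> q (y + t *\<^sub>R z) - t * q z"
  unfolding shiftf_def by (rule cINF_lower[OF shiftf_bdd]) auto

lemma shiftf_ge: "sublin q \<Longrightarrow> (\<And>t. t \<ge> 0 \<Longrightarrow> m \<le> q (y + t *\<^sub>R z) - t * q z) \<Longrightarrow> m \<le> shiftf q z y"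
  unfolding shiftf_def by (rule cINF_greatest) auto

lemma shiftf_sublin:
  assumes s: "sublin q"
  shows "sublin (shiftf q z)"
  unfolding sublin_def
proof (intro conjI allI impI)
  fix x y
  have "shiftf q z (x + y) - shiftf q z y \<le> shiftf q z x"
  proof (rule shiftf_ge[OF s])
    fix t1 :: real assume t1: "t1 \<ge> 0"
    have "shiftf q z (x + y) - q (x + t1 *\<^sub>R z) + t1 * q z \<le> shiftf q z y"
    proof (rule shiftf_ge[OF s])
      fix t2 :: real assume t2: "t2 \<ge> 0"
      have "shiftf q z (x + y) \<le> q ((x + y) + (t1 + t2) *\<^sub>R z) - (t1 + t2) * q z"
        using t1 t2 by (intro shiftf_le[OF s]) auto
      also have "q ((x + y) + (t1 + t2) *\<^sub>R z) \<le> q (x + t1 *\<^sub>R z) + q (y + t2 *\<^sub>R z)"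
      proof -
        have "(x + y) + (t1 + t2) *\<^sub>R z = (x + t1 *\<^sub>R z) + (y + t2 *\<^sub>R z)"
          by (simp add: algebra_simps scaleR_add_left)
        thus ?thesis by (simp only: sublin_add[OF s])
      qed
      finally show "shiftf q z (x + y) - q (x + t1 *\<^sub>R z) + t1 * q z \<le> q (y + t2 *\<^sub>R z) - t2 * q z"
        by (simp add: algebra_simps)
    qed
    thus "shiftf q z (x + y) - shiftf q z y \<le> q (x + t1 *\<^sub>R z) - t1 * q z" by linarith
  qed
  thus "shiftf q z (x + y) \<le> shiftf q z x + shiftf q z y" by linarith
next
  fix c :: real and x assume c: "c > 0"
  have A: "shiftf q z (c *\<^sub>R y) \<le> c * shiftf q z y" if c: "c > 0" for c y
  proof -
    have "shiftf q z (c *\<^sub>R y) / c \<le> shiftf q z y"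
    proof (rule shiftf_ge[OF s])
      fix t :: real assume t: "t \<ge> 0"
      have "shiftf q z (c *\<^sub>R y) \<le> q (c *\<^sub>R y + (c * t) *\<^sub>R z) - (c * t) * q z"
        using t c by (intro shiftf_le[OF s]) auto
      also have "q (c *\<^sub>R y + (c * t) *\<^sub>R z) = c * q (y + t *\<^sub>R z)"
      proof -
        have "c *\<^sub>R y + (c * t) *\<^sub>R z = c *\<^sub>R (y + t *\<^sub>R z)" by (simp add: scaleR_add_right)
        thus ?thesis using sublin_scale[OF s c, of "y + t *\<^sub>R z"] by simp
      qed
      finally show "shiftf q z (c *\<^sub>R y) / c \<le> q (y + t *\<^sub>R z) - t * q z"
        using c by (simp add: field_simps)
    qed
    thus ?thesis using c by (simp add: field_simps)
  qed
  have "shiftf q z x = shiftf q z ((1/c) *\<^sub>R (c *\<^sub>R x))" using c by simp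
  also have "\<dots> \<le> (1/c) * shiftf q z (c *\<^sub>R x)" using c by (intro A) auto
  finally have "c * shiftf q z x \<le> shiftf q z (c *\<^sub>R x)" using c by (simp add: field_simps)
  with A[OF c, of x] show "shiftf q z (c *\<^sub>R x) = c * shiftf q z x" by linarith
qed

lemma shiftf_le_self: "sublin q \<Longrightarrow> shiftf q z y \<le> q y"
  using shiftf_le[of q 0 z y] by simp

lemma shiftf_neg: "sublin q \<Longrightarrow> shiftf q z (- z) \<le> - q z"
  using shiftf_le[of q 1 z "-z"] sublin_0[of q] by simp


lemma chain_inf_sublin:
  assumes C: "C \<noteq> {}" "\<And>q. q \<in> C \<Longrightarrow> sublin q \<and> (\<forall>x. q x \<le> p x)"
    and ch: "\<And>q1 q2. q1 \<in> C \<Longrightarrow> q2 \<in> C \<Longrightarrow> (\<forall>x. q1 x \<le> q2 x) \<or> (\<forall>x. q2 x \<le> q1 x)"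
  shows "sublin (\<lambda>x. INF q\<in>C. q x) \<and> (\<forall>x. (INF q\<in>C. q x) \<le> p x) \<and> (\<forall>q\<in>C. \<forall>x. (INF q\<in>C. q x) \<le> q x)"
proof -
  have bdd: "bdd_below ((\<lambda>q. q x) ` C)" for x
  proof (rule bdd_belowI2[where m="- p (-x)"])
    fix q assume "q \<in> C"
    hence "sublin q" "q (-x) \<le> p (-x)" using C(2) by blast+
    thus "- p (-x) \<le> q x" using sublin_neg[of q x] by linarith
  qed
  have low: "(INF q\<in>C. q x) \<le> q x" if "q \<in> C" for q x
    by (rule cINF_lower[OF bdd that])
  have gr: "m \<le> (INF q\<in>C. q x)" if "\<And>q. q \<in> C \<Longrightarrow> m \<le> q x" for m x
    using C(1) that by (rule cINF_greatest)
  obtain q0 where q0: "q0 \<in> C" using C by auto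
  have "sublin (\<lambda>x. INF q\<in>C. q x)"
    unfolding sublin_def
  proof (intro conjI allI impI)
    fix x y
    have "(INF q\<in>C. q (x + y)) - (INF q\<in>C. q y) \<le> (INF q\<in>C. q x)"
    proof (rule gr)
      fix q1 assume q1: "q1 \<in> C"
      have "(INF q\<in>C. q (x + y)) - q1 x \<le> (INF q\<in>C. q y)"
      proof (rule gr)
        fix q2 assume q2: "q2 \<in> C"
        have "\<exists>q\<in>C. q x \<le> q1 x \<and> q y \<le> q2 y"
        proof (cases "\<forall>x. q1 x \<le> q2 x")
          case True
          hence "q1 y \<le> q2 y" by blast
          thus ?thesis using q1 by (intro bexI[of _ q1]) auto
        next
          case False
          hence "\<forall>x. q2 x \<le> q1 x" using ch[OF q1 q2] by blast
          hence "q2 x \<le> q1 x" by blast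
          thus ?thesis using q2 by (intro bexI[of _ q2]) auto
        qed
        then obtain q where q: "q \<in> C" "q x \<le> q1 x" "q y \<le> q2 y" by blast
        have sq: "sublin q" using C(2)[OF q(1)] by blast
        have "q (x + y) \<le> q x + q y" by (rule sublin_add[OF sq])
        with low[OF q(1), of "x+y"] q show "(INF q\<in>C. q (x + y)) - q1 x \<le> q2 y" by linarith
      qed
      thus "(INF q\<in>C. q (x + y)) - (INF q\<in>C. q y) \<le> q1 x" by linarith
    qed
    thus "(INF q\<in>C. q (x + y)) \<le> (INF q\<in>C. q x) + (INF q\<in>C. q y)" by linarith
  next
    fix c :: real and x assume c: "c > 0"
    have A: "(INF q\<in>C. q (c *\<^sub>R y)) \<le> c * (INF q\<in>C. q y)" if c: "c > 0" for c y
    proof -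
      have "(INF q\<in>C. q (c *\<^sub>R y)) / c \<le> (INF q\<in>C. q y)"
      proof (rule gr)
        fix q assume q: "q \<in> C"
        have "(INF q\<in>C. q (c *\<^sub>R y)) \<le> q (c *\<^sub>R y)" by (rule low[OF q])
        also have "\<dots> = c * q y" using C(2)[OF q] c sublin_scale by blast
        finally show "(INF q\<in>C. q (c *\<^sub>R y)) / c \<le> q y" using c by (simp add: field_simps)
      qed
      thus ?thesis using c by (simp add: field_simps)
    qed
    have "(INF q\<in>C. q x) = (INF q\<in>C. q ((1/c) *\<^sub>R (c *\<^sub>R x)))" using c by simp
    also have "\<dots> \<le> (1/c) * (INF q\<in>C. q (c *\<^sub>R x))" using c by (intro A) auto
    finally have "c * (INF q\<in>C. q x) \<le> (INF q\<in>C. q (c *\<^sub>R x))" using c by (simp add: field_simps)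
    with A[OF c, of x] show "(INF q\<in>C. q (c *\<^sub>R x)) = c * (INF q\<in>C. q x)" by linarith
  qed
  moreover have "\<forall>x. (INF q\<in>C. q x) \<le> p x"
  proof
    fix x
    have "q0 x \<le> p x" using C(2)[OF q0] by blast
    thus "(INF q\<in>C. q x) \<le> p x" using low[OF q0, of x] by linarith
  qed
  moreover have "\<forall>q\<in>C. \<forall>x. (INF q\<in>C. q x) \<le> q x" using low by blast
  ultimately show ?thesis by (rule conjI[OF _ conjI])
qed

lemma minimal_sublin_linear:
  assumes s: "sublin q" and minq: "\<And>q'. sublin q' \<Longrightarrow> (\<forall>x. q' x \<le> q x) \<Longrightarrow> q' = q"
  shows "linear q"
proof -
  have neg: "q (- x) = - q x" for x
  proof -
    have h: "\<forall>y. shiftf q x y \<le> q y" using shiftf_le_self[OF s] by blast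
    have "shiftf q x = q" by (rule minq[OF shiftf_sublin[OF s] h])
    hence "q (-x) \<le> - q x" using shiftf_neg[OF s, of x] by simp
    with sublin_neg[OF s, of x] show ?thesis by linarith
  qed
  have add: "q (x + y) = q x + q y" for x y
  proof -
    have "q (x + y) \<le> q x + q y" by (rule sublin_add[OF s])
    moreover have "q (- x + - y) \<le> q (-x) + q (-y)" by (rule sublin_add[OF s])
    hence "q (- (x + y)) \<le> - q x - q y" using neg by (simp add: add.commute)
    hence "q (x + y) \<ge> q x + q y" using neg[of "x+y"] by linarith
    ultimately show ?thesis by linarith
  qed
  have sc: "q (c *\<^sub>R x) = c * q x" for c x
  proof -
    consider "c > 0" | "c = 0" | "c < 0" by linarith
    thus ?thesis
    proof cases
      case 1 thus ?thesis by (rule sublin_scale[OF s])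
    next
      case 2 thus ?thesis using sublin_0[OF s] by simp
    next
      case 3
      hence "q ((- c) *\<^sub>R x) = (- c) * q x" by (intro sublin_scale[OF s]) simp
      hence "q (- (c *\<^sub>R x)) = (- c) * q x" by (simp only: scaleR_minus_left)
      moreover have "q (c *\<^sub>R x) = - q (- (c *\<^sub>R x))" using neg[of "c *\<^sub>R x"] by simp
      ultimately show ?thesis by simp
    qed
  qed
  show ?thesis by (rule linearI) (simp_all add: add sc)
qed

lemma hahn_banach0:
  fixes p :: "'a::real_vector \<Rightarrow> real"
  assumes s: "sublin p"
  shows "\<exists>f. linear f \<and> (\<forall>x. f x \<le> p x)"
proof -
  define A where "A = {q. sublin q \<and> (\<forall>x. q x \<le> p x)}"
  define P where "P = (\<lambda>(q1::'a\<Rightarrow>real) q2. \<forall>x. q2 x \<le> q1 x)"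
  have po: "partial_order_on A (relation_of P A)"
  proof (rule partial_order_on_relation_ofI)
    show "\<And>a. a \<in> A \<Longrightarrow> P a a" unfolding P_def by simp
    show "\<And>a b c. a \<in> A \<Longrightarrow> b \<in> A \<Longrightarrow> c \<in> A \<Longrightarrow> P a b \<Longrightarrow> P b c \<Longrightarrow> P a c"
    proof -
      fix a b c assume "P a b" "P b c"
      thus "P a c" unfolding P_def by (metis order.trans)
    qed
    show "\<And>a b. a \<in> A \<Longrightarrow> b \<in> A \<Longrightarrow> P a b \<Longrightarrow> P b a \<Longrightarrow> a = b"
    proof -
      fix a b assume h: "P a b" "P b a"
      show "a = b"
      proof
        fix x show "a x = b x" using h unfolding P_def by (metis order.antisym)
      qed
    qed
  qed
  have "\<exists>m\<in>A. \<forall>a\<in>A. P m a \<longrightarrow> a = m"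
  proof (rule predicate_Zorn[OF po])
    fix C assume C: "C \<in> Chains (relation_of P A)"
    hence CA: "C \<subseteq> A" unfolding Chains_def relation_of_def by auto
    show "\<exists>u\<in>A. \<forall>a\<in>C. P a u"
    proof (cases "C = {}")
      case True
      have "p \<in> A" unfolding A_def using s by blast
      thus ?thesis using True by blast
    next
      case False
      have "sublin (\<lambda>x. INF q\<in>C. q x) \<and> (\<forall>x. (INF q\<in>C. q x) \<le> p x) \<and> (\<forall>q\<in>C. \<forall>x. (INF q\<in>C. q x) \<le> q x)"
      proof (rule chain_inf_sublin[OF False])
        show "\<And>q. q \<in> C \<Longrightarrow> sublin q \<and> (\<forall>x. q x \<le> p x)" using CA unfolding A_def by blast
        show "\<And>q1 q2. q1 \<in> C \<Longrightarrow> q2 \<in> C \<Longrightarrow> (\<forall>x. q1 x \<le> q2 x) \<or> (\<forall>x. q2 x \<le> q1 x)"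
        proof -
          fix q1 q2 assume "q1 \<in> C" "q2 \<in> C"
          hence "(q1, q2) \<in> relation_of P A \<or> (q2, q1) \<in> relation_of P A"
            using C unfolding Chains_def by blast
          hence "P q1 q2 \<or> P q2 q1" unfolding relation_of_def by blast
          thus "(\<forall>x. q1 x \<le> q2 x) \<or> (\<forall>x. q2 x \<le> q1 x)" unfolding P_def by blast
        qed
      qed
      note h3 = this
      show ?thesis
      proof (rule bexI[where x="\<lambda>x. INF q\<in>C. q x"])
        show "\<forall>a\<in>C. P a (\<lambda>x. INF q\<in>C. q x)" unfolding P_def using h3 by blast
        show "(\<lambda>x. INF q\<in>C. q x) \<in> A" unfolding A_def using h3 by blast
      qed
    qed
  qed
  then obtain m where m: "m \<in> A" "\<And>a. a \<in> A \<Longrightarrow> P m a \<Longrightarrow> a = m" by blast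
  have "linear m"
  proof (rule minimal_sublin_linear)
    show "sublin m" using m(1) unfolding A_def by blast
    fix q'
    assume h: "sublin q'" "\<forall>x. q' x \<le> m x"
    have mp: "\<forall>x. m x \<le> p x" using m(1) unfolding A_def by blast
    have "\<forall>x. q' x \<le> p x"
    proof
      fix x show "q' x \<le> p x" using h(2) mp by (meson order.trans)
    qed
    hence "q' \<in> A" unfolding A_def using h(1) by blast
    moreover have "P m q'" unfolding P_def using h by blast
    ultimately show "q' = m" by (rule m(2))
  qed
  moreover have "\<forall>x. m x \<le> p x" using m(1) unfolding A_def by blast
  ultimately show ?thesis by blast
qed

lemma hahn_banach1:
  fixes p :: "'a::real_vector \<Rightarrow> real"
  assumes s: "sublin p"
  shows "\<exists>f. linear f \<and> (\<forall>x. f x \<le> p x) \<and> f z = p z"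
proof -
  obtain f where f: "linear f" "\<forall>x. f x \<le> shiftf p z x"
    using hahn_banach0[OF shiftf_sublin[OF s]] by blast
  have le: "f x \<le> p x" for x using f(2) shiftf_le_self[OF s, of z x] by (meson order.trans)
  have "f (-z) \<le> - p z" using f(2) shiftf_neg[OF s, of z] by (meson order.trans)
  hence "f z \<ge> p z" using linear_neg[OF f(1), of z] by simp
  with le[of z] have "f z = p z" by linarith
  thus ?thesis using f(1) le by blast
qed


lemma separation:
  fixes K :: "'a::real_normed_vector set"
  assumes Kne: "K \<noteq> {}" and Kcl: "closed K" and Kcv: "convex K" and Kbd: "bounded K"
    and z: "z \<notin> K"
  shows "\<exists>(f::'a \<Rightarrow> real) s. bounded_linear f \<and> s < f z \<and> (\<forall>k\<in>K. f k \<le> s)"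
proof -
  obtain k0 where k0: "k0 \<in> K" using Kne by auto
  define r where "r = infdist z K"
  have r: "r > 0" unfolding r_def using infdist_pos_not_in_closed[OF Kcl Kne z] .
  obtain B0 where B0: "\<forall>k\<in>K. norm k \<le> B0" using Kbd bounded_iff by blast
  define B where "B = B0 + norm k0 + 1"
  have nk0: "norm k0 \<le> B0" using B0 k0 by blast
  have B: "B > 0" "\<forall>k\<in>K. norm (k - k0) \<le> B"
  proof -
    show "B > 0" using nk0 norm_ge_zero[of k0] unfolding B_def by linarith
    show "\<forall>k\<in>K. norm (k - k0) \<le> B"
    proof
      fix k assume "k \<in> K"
      hence "norm k \<le> B0" using B0 by blast
      thus "norm (k - k0) \<le> B" using norm_triangle_ineq4[of k k0] unfolding B_def by linarith
    qed
  qed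
  define A where "A = {y. \<exists>k\<in>K. norm (y - (k - k0)) < r}"
  have Acv: "convex A"
  proof (rule convexI)
    fix y1 y2 and u v :: real assume y1: "y1 \<in> A" and y2: "y2 \<in> A" and uv0: "0 \<le> u" "0 \<le> v" "u + v = 1"
    have uv: "0 \<le> u \<and> 0 \<le> v \<and> u + v = 1" using uv0 by blast
    obtain k1 where k1: "k1 \<in> K" "norm (y1 - (k1 - k0)) < r" using y1 A_def by auto
    obtain k2 where k2: "k2 \<in> K" "norm (y2 - (k2 - k0)) < r" using y2 A_def by auto
    have kk: "u *\<^sub>R k1 + v *\<^sub>R k2 \<in> K" using convexD[OF Kcv k1(1) k2(1)] uv by blast
    have k0eq: "u *\<^sub>R k0 + v *\<^sub>R k0 = k0" using uv by (simp flip: scaleR_add_left)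
    have "u *\<^sub>R (y1 - (k1 - k0)) + v *\<^sub>R (y2 - (k2 - k0))
       = u *\<^sub>R y1 + v *\<^sub>R y2 - (u *\<^sub>R k1 + v *\<^sub>R k2) + (u *\<^sub>R k0 + v *\<^sub>R k0)"
      by (simp add: algebra_simps)
    hence eq: "u *\<^sub>R y1 + v *\<^sub>R y2 - (u *\<^sub>R k1 + v *\<^sub>R k2 - k0)
       = u *\<^sub>R (y1 - (k1 - k0)) + v *\<^sub>R (y2 - (k2 - k0))"
      unfolding k0eq by (simp add: algebra_simps)
    have "norm (u *\<^sub>R (y1 - (k1 - k0)) + v *\<^sub>R (y2 - (k2 - k0)))
        \<le> norm (u *\<^sub>R (y1 - (k1 - k0))) + norm (v *\<^sub>R (y2 - (k2 - k0)))"
      by (rule norm_triangle_ineq)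
    also have "\<dots> = u * norm (y1 - (k1 - k0)) + v * norm (y2 - (k2 - k0))"
      using uv by simp
    also have "\<dots> < r"
    proof (cases "u = 0")
      case True thus ?thesis using uv k2 by simp
    next
      case False
      hence "u * norm (y1 - (k1 - k0)) < u * r" using uv k1 by simp
      moreover have "v * norm (y2 - (k2 - k0)) \<le> v * r" using uv k2 by (simp add: mult_left_mono)
      moreover have "u * r + v * r = (u + v) * r" by (simp add: algebra_simps)
      ultimately show ?thesis using uv by simp
    qed
    finally have "norm (u *\<^sub>R y1 + v *\<^sub>R y2 - (u *\<^sub>R k1 + v *\<^sub>R k2 - k0)) < r"
      by (simp only: eq)
    thus "u *\<^sub>R y1 + v *\<^sub>R y2 \<in> A" unfolding A_def using kk by blast
  qed
  have ballA: "norm y < r \<Longrightarrow> y \<in> A" for y unfolding A_def using k0 by force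
  define G where "G y = {t::real. t > 0 \<and> (1/t) *\<^sub>R y \<in> A}" for y
  define p where "p y = Inf (G y)" for y
  have Gne: "(norm y + 1) / r \<in> G y" for y
  proof -
    have "norm ((1 / ((norm y + 1) / r)) *\<^sub>R y) = norm y * r / (norm y + 1)"
      using r by (simp add: field_simps)
    also have "\<dots> < r"
    proof -
      have d: "0 < norm y + 1" by (simp add: add_nonneg_pos)
      have "norm y * r < r * (norm y + 1)" using r by (simp add: algebra_simps)
      thus ?thesis using d by (simp add: pos_divide_less_eq)
    qed
    finally have "(1 / ((norm y + 1) / r)) *\<^sub>R y \<in> A" by (rule ballA)
    moreover have "(norm y + 1) / r > 0" using r by (intro divide_pos_pos add_nonneg_pos) simp_all
    ultimately show ?thesis unfolding G_def by blast
  qed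
  have Gbdd: "bdd_below (G y)" for y unfolding G_def by (rule bdd_belowI[where m=0]) auto
  have plow: "p y \<le> t" if "t \<in> G y" for t y unfolding p_def using cInf_lower[OF that Gbdd] .
  have pgr: "m \<le> p y" if "\<And>t. t \<in> G y \<Longrightarrow> m \<le> t" for m y
    unfolding p_def using Gne that by (intro cInf_greatest) auto
  have Gsc: "c * t \<in> G (c *\<^sub>R y)" if "t \<in> G y" "c > 0" for c t y
    using that unfolding G_def by (auto simp: field_simps)
  have psub: "sublin p"
    unfolding sublin_def
  proof (intro conjI allI impI)
    fix x y
    have "p (x + y) - p y \<le> p x"
    proof (rule pgr)
      fix t1 assume t1: "t1 \<in> G x"
      have "p (x + y) - t1 \<le> p y"
      proof (rule pgr)
        fix t2 assume t2: "t2 \<in> G y"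
        have pos: "t1 > 0" "t2 > 0" using t1 t2 G_def by auto
        have a1: "(1/t1) *\<^sub>R x \<in> A" and a2: "(1/t2) *\<^sub>R y \<in> A" using t1 t2 unfolding G_def by auto
        have s1: "t1 / (t1 + t2) + t2 / (t1 + t2) = 1" using pos by (simp add: add_divide_distrib[symmetric])
        have "(t1 / (t1 + t2)) *\<^sub>R ((1/t1) *\<^sub>R x) + (t2 / (t1 + t2)) *\<^sub>R ((1/t2) *\<^sub>R y) \<in> A"
        proof -
          have nn: "0 \<le> t1 / (t1 + t2)" "0 \<le> t2 / (t1 + t2)" using pos by simp_all
          show ?thesis by (rule convexD[OF Acv a1 a2 nn s1])
        qed
        moreover have "(t1 / (t1 + t2)) *\<^sub>R ((1/t1) *\<^sub>R x) + (t2 / (t1 + t2)) *\<^sub>R ((1/t2) *\<^sub>R y)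
            = (1 / (t1 + t2)) *\<^sub>R (x + y)" using pos by (simp add: scaleR_add_right)
        ultimately have "t1 + t2 \<in> G (x + y)" unfolding G_def using pos by auto
        thus "p (x + y) - t1 \<le> t2" using plow by fastforce
      qed
      thus "p (x + y) - p y \<le> t1" by linarith
    qed
    thus "p (x + y) \<le> p x + p y" by linarith
  next
    fix c :: real and x assume c: "c > 0"
    have Al: "p (c *\<^sub>R y) \<le> c * p y" if c: "c > 0" for c y
    proof -
      have "p (c *\<^sub>R y) / c \<le> p y"
      proof (rule pgr)
        fix t assume "t \<in> G y"
        hence "p (c *\<^sub>R y) \<le> c * t" using Gsc c plow by blast
        thus "p (c *\<^sub>R y) / c \<le> t" using c by (simp add: field_simps)
      qed
      thus ?thesis using c by (simp add: field_simps)
    qed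
    have "p x = p ((1/c) *\<^sub>R (c *\<^sub>R x))" using c by simp
    also have "\<dots> \<le> (1/c) * p (c *\<^sub>R x)" using c by (intro Al) auto
    finally have "c * p x \<le> p (c *\<^sub>R x)" using c by (simp add: field_simps)
    with Al[OF c, of x] show "p (c *\<^sub>R x) = c * p x" by linarith
  qed
  have pbound: "p y \<le> (2 / r) * norm y" for y
  proof (cases "y = 0")
    case True thus ?thesis using sublin_0[OF psub] by simp
  next
    case False
    define e where "e = (1 / norm y) *\<^sub>R y"
    have ne: "norm e = 1" using False by (simp add: e_def)
    have "p e \<le> 2 / r" using plow[OF Gne[of e]] ne by simp
    moreover have "y = norm y *\<^sub>R e" using False by (simp add: e_def)
    hence "p y = norm y * p e" using sublin_scale[OF psub, of "norm y" e] False by simp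
    moreover have "norm y * p e \<le> norm y * (2 / r)" using \<open>p e \<le> 2 / r\<close> norm_ge_zero[of y] by (rule mult_left_mono)
    ultimately show ?thesis by (simp add: mult.commute)
  qed
  define z' where "z' = z - k0"
  have z'A: "z' \<notin> A"
  proof
    assume "z' \<in> A"
    then obtain k where k: "k \<in> K" "norm (z' - (k - k0)) < r" unfolding A_def by auto
    have "infdist z K \<le> dist z k" using k(1) by (rule infdist_le)
    thus False using k(2) unfolding z'_def r_def dist_norm by simp
  qed
  have pz: "p z' \<ge> 1"
  proof (rule ccontr)
    assume "\<not> 1 \<le> p z'"
    hence "Inf (G z') < 1" unfolding p_def by simp
    then obtain t where t: "t \<in> G z'" "t < 1" using cInf_lessD[of "G z'" 1] Gne by blast
    hence tp: "t > 0" "(1/t) *\<^sub>R z' \<in> A" unfolding G_def by auto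
    have "0 \<in> A" using ballA r by simp
    have "t *\<^sub>R ((1/t) *\<^sub>R z') + (1 - t) *\<^sub>R 0 \<in> A"
      using convexD[OF Acv tp(2) \<open>0 \<in> A\<close>, of t "1 - t"] tp(1) t(2) by simp
    hence "z' \<in> A" using tp by simp
    with z'A show False by simp
  qed
  define \<delta> where "\<delta> = r / (2 * B)"
  have \<delta>: "\<delta> > 0" using r B by (simp add: \<delta>_def)
  have pk: "p (k - k0) \<le> 1 / (1 + \<delta>)" if k: "k \<in> K" for k
  proof -
    have "norm ((1 + \<delta>) *\<^sub>R (k - k0) - (k - k0)) = \<delta> * norm (k - k0)"
    proof -
      have "(1 + \<delta>) *\<^sub>R (k - k0) - (k - k0) = \<delta> *\<^sub>R (k - k0)" by (simp add: scaleR_add_left)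
      thus ?thesis using \<delta> by simp
    qed
    also have "\<dots> \<le> \<delta> * B" using B k \<delta> by (simp add: mult_left_mono)
    also have "\<dots> < r" using r B by (simp add: \<delta>_def)
    finally have "(1 + \<delta>) *\<^sub>R (k - k0) \<in> A" unfolding A_def using k by blast
    hence "1 / (1 + \<delta>) \<in> G (k - k0)" unfolding G_def using \<delta> by simp
    thus ?thesis by (rule plow)
  qed
  obtain f where f: "linear f" "\<forall>x. f x \<le> p x" "f z' = p z'" using hahn_banach1[OF psub] by blast
  have bl: "bounded_linear f"
  proof (rule bounded_linear_intro[where K="2 / r"])
    show "f (x + y) = f x + f y" for x y using f(1) by (simp add: linear_add)
    show "f (c *\<^sub>R x) = c *\<^sub>R f x" for c x using f(1) by (simp add: linear_scale)
    show "norm (f x) \<le> norm x * (2 / r)" for x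
    proof -
      have "f x \<le> (2/r) * norm x" using f(2) pbound[of x] by (meson order.trans)
      moreover have "f (-x) \<le> (2/r) * norm (-x)" using f(2) pbound[of "-x"] by (meson order.trans)
      hence "- f x \<le> (2/r) * norm x" using linear_neg[OF f(1)] by simp
      ultimately show ?thesis by (simp add: abs_le_iff mult.commute)
    qed
  qed
  have h1: "f k \<le> f k0 + 1 / (1 + \<delta>)" if "k \<in> K" for k
  proof -
    have "f (k - k0) \<le> p (k - k0)" using f(2) by blast
    thus ?thesis using pk[OF that] linear_diff[OF f(1), of k k0] by linarith
  qed
  have h2: "f k0 + 1 / (1 + \<delta>) < f z"
  proof -
    have "1 / (1 + \<delta>) < 1" using \<delta> by simp
    moreover have "f z - f k0 \<ge> 1" using f(3) pz linear_diff[OF f(1), of z k0] z'_def by simp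
    ultimately show ?thesis by linarith
  qed
  have "\<forall>k\<in>K. f k \<le> f k0 + 1 / (1 + \<delta>)" using h1 by blast
  with bl h2 have "bounded_linear f \<and> f k0 + 1 / (1 + \<delta>) < f z \<and> (\<forall>k\<in>K. f k \<le> f k0 + 1 / (1 + \<delta>))"
    by blast
  thus ?thesis by blast
qed


lemma sublinI:
  assumes "\<And>x y. p (x + y) \<le> p x + p y" and "\<And>c x. c > 0 \<Longrightarrow> p (c *\<^sub>R x) \<le> c * p x"
  shows "sublin p"
  unfolding sublin_def
proof (intro conjI allI impI)
  show "p (x + y) \<le> p x + p y" for x y by (rule assms(1))
  fix c :: real and x assume c: "c > 0"
  have "p x = p ((1/c) *\<^sub>R (c *\<^sub>R x))" using c by simp
  also have "\<dots> \<le> (1/c) * p (c *\<^sub>R x)" using c by (intro assms(2)) auto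
  finally have "c * p x \<le> p (c *\<^sub>R x)" using c by (simp add: field_simps)
  with assms(2)[OF c, of x] show "p (c *\<^sub>R x) = c * p x" by linarith
qed

lemma exists_nearest:
  fixes C :: "'v::banach set" and g :: 'v
  assumes refl: "reflexive_space TYPE('v)" and Cne: "C \<noteq> {}" and Ccl: "closed C" and Ccv: "convex C"
  shows "\<exists>u\<in>C. norm (g - u) = (INF v\<in>C. norm (g - v))"
proof -
  define d where "d = (INF v\<in>C. norm (g - v))"
  have bddC: "bdd_below ((\<lambda>v. norm (g - v)) ` C)" by (rule bdd_belowI2[where m=0]) auto
  have dle: "d \<le> norm (g - v)" if "v \<in> C" for v unfolding d_def by (rule cINF_lower[OF bddC that])
  have "\<forall>n. \<exists>v. v \<in> C \<and> norm (g - v) < d + 1 / real (Suc n)"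
  proof
    fix n
    have "(INF v\<in>C. norm (g - v)) < d + 1 / real (Suc n)" unfolding d_def by simp
    then obtain y where "y \<in> (\<lambda>v. norm (g - v)) ` C" "y < d + 1 / real (Suc n)"
      using cInf_lessD[of "(\<lambda>v. norm (g - v)) ` C"] Cne by blast
    thus "\<exists>v. v \<in> C \<and> norm (g - v) < d + 1 / real (Suc n)" by auto
  qed
  then obtain x where x0: "\<forall>n. x n \<in> C \<and> norm (g - x n) < d + 1 / real (Suc n)"
    by (rule choice[THEN exE]) blast
  hence x: "\<And>n. x n \<in> C" "\<And>n. norm (g - x n) < d + 1 / real (Suc n)" by blast+
  define M where "M = norm g + d + 1"
  have xM: "norm (x n) \<le> M" for n
  proof -
    have "norm (x n) \<le> norm g + norm (g - x n)"
      using norm_triangle_ineq4[of g "g - x n"] by simp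
    moreover have "1 / real (Suc n) \<le> 1" by simp
    ultimately show ?thesis using x(2)[of n] unfolding M_def by linarith
  qed
  have M0: "M \<ge> 0" using xM[of 0] norm_ge_zero[of "x 0"] by linarith
  define E where "E f = {s. \<exists>N. \<forall>n\<ge>N. blinfun_apply f (x n) \<le> s}" for f :: "'v \<Rightarrow>\<^sub>L real"
  define q where "q f = Inf (E f)" for f
  have fxb: "\<bar>blinfun_apply f (x n)\<bar> \<le> norm f * M" for f n
  proof -
    have "\<bar>blinfun_apply f (x n)\<bar> \<le> norm f * norm (x n)" using norm_blinfun[of f "x n"] by simp
    also have "\<dots> \<le> norm f * M" using xM by (simp add: mult_left_mono)
    finally show ?thesis .
  qed
  have Ene: "norm f * M \<in> E f" for f
  proof -
    have "\<forall>n\<ge>0. blinfun_apply f (x n) \<le> norm f * M" using fxb abs_le_iff by blast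
    thus ?thesis unfolding E_def by blast
  qed
  have Ebdd: "bdd_below (E f)" for f
  proof (rule bdd_belowI[where m="- (norm f * M)"])
    fix s assume "s \<in> E f"
    then obtain N where "\<forall>n\<ge>N. blinfun_apply f (x n) \<le> s" unfolding E_def by auto
    hence "blinfun_apply f (x N) \<le> s" by simp
    thus "- (norm f * M) \<le> s" using fxb[of f N] by linarith
  qed
  have qlow: "q f \<le> s" if "s \<in> E f" for f s unfolding q_def by (rule cInf_lower[OF that Ebdd])
  have qgr: "m \<le> q f" if "\<And>s. s \<in> E f \<Longrightarrow> m \<le> s" for m f
    unfolding q_def using Ene that by (intro cInf_greatest) auto
  have qsub: "sublin q"
  proof (rule sublinI)
    fix f h
    have "q (f + h) - q h \<le> q f"
    proof (rule qgr)
      fix s1 assume s1: "s1 \<in> E f"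
      have "q (f + h) - s1 \<le> q h"
      proof (rule qgr)
        fix s2 assume s2: "s2 \<in> E h"
        obtain N1 where N1: "\<forall>n\<ge>N1. blinfun_apply f (x n) \<le> s1" using s1 E_def by auto
        obtain N2 where N2: "\<forall>n\<ge>N2. blinfun_apply h (x n) \<le> s2" using s2 E_def by auto
        have "\<forall>n\<ge>max N1 N2. blinfun_apply (f + h) (x n) \<le> s1 + s2"
          using N1 N2 by (simp add: blinfun.add_left add_mono)
        hence "s1 + s2 \<in> E (f + h)" unfolding E_def by blast
        hence "q (f + h) \<le> s1 + s2" by (rule qlow)
        thus "q (f + h) - s1 \<le> s2" by linarith
      qed
      thus "q (f + h) - q h \<le> s1" by linarith
    qed
    thus "q (f + h) \<le> q f + q h" by linarith
  next
    fix c :: real and f assume c: "c > 0"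
    have "q (c *\<^sub>R f) / c \<le> q f"
    proof (rule qgr)
      fix s assume "s \<in> E f"
      then obtain N where N: "\<forall>n\<ge>N. blinfun_apply f (x n) \<le> s" using E_def by auto
      hence "\<forall>n\<ge>N. blinfun_apply (c *\<^sub>R f) (x n) \<le> c * s" using c
        by (simp add: scaleR_blinfun.rep_eq mult_left_mono)
      hence "c * s \<in> E (c *\<^sub>R f)" unfolding E_def by blast
      hence "q (c *\<^sub>R f) \<le> c * s" by (rule qlow)
      thus "q (c *\<^sub>R f) / c \<le> s" using c by (simp add: field_simps)
    qed
    thus "q (c *\<^sub>R f) \<le> c * q f" using c by (simp add: field_simps)
  qed
  obtain \<Phi> where \<Phi>: "linear \<Phi>" "\<forall>f. \<Phi> f \<le> q f" using hahn_banach0[OF qsub] by blast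
  have blP: "bounded_linear \<Phi>"
  proof (rule bounded_linear_intro[where K=M])
    show "\<Phi> (f + h) = \<Phi> f + \<Phi> h" for f h using \<Phi>(1) by (simp add: linear_add)
    show "\<Phi> (c *\<^sub>R f) = c *\<^sub>R \<Phi> f" for c f using \<Phi>(1) by (simp add: linear_scale)
    show "norm (\<Phi> f) \<le> norm f * M" for f
    proof -
      have "\<Phi> f \<le> norm f * M" using \<Phi>(2) qlow[OF Ene[of f]] by (meson order.trans)
      moreover have "\<Phi> (-f) \<le> norm (-f) * M" using \<Phi>(2) qlow[OF Ene[of "-f"]] by (meson order.trans)
      hence "- \<Phi> f \<le> norm f * M" using linear_neg[OF \<Phi>(1)] by simp
      ultimately show ?thesis by (simp add: abs_le_iff)
    qed
  qed
  have "\<exists>x0. \<forall>f. blinfun_apply (Blinfun \<Phi>) f = blinfun_apply f x0"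
    using refl unfolding reflexive_space_def by (rule spec)
  then obtain x0 where x0': "\<forall>f. blinfun_apply (Blinfun \<Phi>) f = blinfun_apply f x0" by (rule exE)
  have x0: "\<Phi> f = blinfun_apply f x0" for f
    using x0' unfolding bounded_linear_Blinfun_apply[OF blP] by (rule spec)
  have key: "f x0 \<le> s" if bl: "bounded_linear f" and ev: "\<forall>n\<ge>N. f (x n) \<le> s" for f :: "'v \<Rightarrow> real" and s N
  proof -
    have "s \<in> E (Blinfun f)" unfolding E_def bounded_linear_Blinfun_apply[OF bl] using ev by blast
    hence "q (Blinfun f) \<le> s" by (rule qlow)
    hence "\<Phi> (Blinfun f) \<le> s" using \<Phi>(2) by (meson order.trans)
    moreover have "\<Phi> (Blinfun f) = f x0" unfolding x0 bounded_linear_Blinfun_apply[OF bl] ..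
    ultimately show ?thesis by simp
  qed
  have inK: "x0 \<in> C \<inter> cball g (d + 1 / real (Suc n))" for n
  proof (rule ccontr)
    let ?K = "C \<inter> cball g (d + 1 / real (Suc n))"
    assume nin: "x0 \<notin> ?K"
    have xm: "x m \<in> ?K" if "m \<ge> n" for m
    proof -
      have "1 / real (Suc m) \<le> 1 / real (Suc n)" using that by (simp add: frac_le)
      hence "dist g (x m) \<le> d + 1 / real (Suc n)" using x(2)[of m] by (simp add: dist_norm)
      thus ?thesis using x(1)[of m] by simp
    qed
    have "?K \<noteq> {}" using xm by blast
    moreover have "closed ?K" using Ccl by (intro closed_Int closed_cball)
    moreover have "convex ?K" using Ccv by (simp add: convex_Int)
    moreover have "bounded ?K" by (simp add: bounded_Int)
    ultimately have "\<exists>(f::'v \<Rightarrow> real) s. bounded_linear f \<and> s < f x0 \<and> (\<forall>k\<in>?K. f k \<le> s)"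
      by (intro separation nin)
    then obtain f :: "'v \<Rightarrow> real" and s :: real where fs: "bounded_linear f" "s < f x0" "\<forall>k\<in>?K. f k \<le> s"
      by blast
    have "\<forall>m\<ge>n. f (x m) \<le> s" using fs(3) xm by blast
    hence "f x0 \<le> s" by (rule key[OF fs(1)])
    with fs(2) show False by simp
  qed
  have x0C: "x0 \<in> C" using inK[of 0] by simp
  have "norm (g - x0) \<le> d"
  proof (rule ccontr)
    assume "\<not> norm (g - x0) \<le> d"
    hence "norm (g - x0) - d > 0" by simp
    then obtain n where n: "inverse (real (Suc n)) < norm (g - x0) - d" using reals_Archimedean by blast
    have "dist g x0 \<le> d + 1 / real (Suc n)" using inK[of n] by simp
    thus False using n by (simp add: dist_norm inverse_eq_divide)
  qed
  with dle[OF x0C] have "norm (g - x0) = d" by simp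
  thus ?thesis using x0C unfolding d_def by blast
qed

lemma unique_nearest:
  fixes C :: "'v::real_normed_vector set"
  assumes sc: "strictly_convex_space TYPE('v)" and Ccv: "convex C"
    and u1: "u1 \<in> C" "norm (g - u1) = d" and u2: "u2 \<in> C" "norm (g - u2) = d"
    and low: "\<forall>v\<in>C. d \<le> norm (g - v)"
  shows "u1 = u2"
proof (rule ccontr)
  assume ne: "u1 \<noteq> u2"
  have dpos: "d > 0"
  proof (rule ccontr)
    assume "\<not> d > 0"
    hence "d = 0" using u1(2) norm_ge_zero[of "g - u1"] by linarith
    thus False using u1 u2 ne by simp
  qed
  define a where "a = (1/d) *\<^sub>R (g - u1)"
  define b where "b = (1/d) *\<^sub>R (g - u2)"
  have na: "norm a = 1" "norm b = 1" using dpos u1 u2 by (auto simp: a_def b_def)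
  have "a \<noteq> b" using ne dpos unfolding a_def b_def by auto
  hence lt: "norm ((1/2) *\<^sub>R (a + b)) < 1" using sc na unfolding strictly_convex_space_def by blast
  define m where "m = (1/2) *\<^sub>R u1 + (1/2) *\<^sub>R u2"
  have mC: "m \<in> C" unfolding m_def by (rule convexD[OF Ccv u1(1) u2(1)]) simp_all
  have gg: "(1/2) *\<^sub>R g + (1/2) *\<^sub>R g = g" by (simp flip: scaleR_add_left)
  have "g - m = d *\<^sub>R ((1/2) *\<^sub>R (a + b))" using dpos
    by (simp add: a_def b_def m_def algebra_simps scaleR_add_right gg)
  hence "norm (g - m) = d * norm ((1/2) *\<^sub>R (a + b))" using dpos by simp
  also have "\<dots> < d" using lt dpos by simp
  moreover have "d \<le> norm (g - m)" using low mC by blast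
  ultimately show False by linarith
qed


theorem mainTheorem16:
  fixes iV :: "'v::banach \<Rightarrow> 'vt::real_vector" and iW :: "'w::banach \<Rightarrow> 'wt::real_vector"
    and R :: "('vt \<times> 'wt) set" and le :: "'vt \<Rightarrow> 'vt \<Rightarrow> bool"
    and \<psi>1 \<psi>2 :: 'vt
  assumes "ordered_gradient_space iV iW R le"
    and "\<psi>1 \<in> B_plus iV le" and "\<psi>2 \<in> B_plus iV le"
  shows "\<exists>!u. u \<in> Omega_down iV le \<psi>1 \<psi>2 \<and>
           norm (gmax iV le \<psi>1 \<psi>2 - u) =
             (INF v \<in> Omega_down iV le \<psi>1 \<psi>2. norm (gmax iV le \<psi>1 \<psi>2 - v))"
proof -
  have lin: "linear iV" and lp: "linear_preorder le"
    and lim: "\<And>(u::nat \<Rightarrow> 'v) x \<psi>. (\<forall>i. le (iV (u i)) \<psi>) \<Longrightarrow> u \<longlonglongrightarrow> x \<Longrightarrow> le (iV x) \<psi>"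
    and sc: "strictly_convex_space TYPE('v)" and refl: "reflexive_space TYPE('v)"
    using assms(1) unfolding ordered_gradient_space_def preordered_gradient_space_def gradient_space_def
    by blast+
  have lrefl: "le a a" for a using lp unfolding linear_preorder_def by blast
  have ltrans: "le a b \<Longrightarrow> le b c \<Longrightarrow> le a c" for a b c using lp unfolding linear_preorder_def by blast
  have ladd: "le b c \<Longrightarrow> le (a + b) (a + c)" for a b c using lp unfolding linear_preorder_def by blast
  have lsc: "le a b \<Longrightarrow> \<alpha> \<ge> 0 \<Longrightarrow> le (\<alpha> *\<^sub>R a) (\<alpha> *\<^sub>R b)" for a b \<alpha> using lp unfolding linear_preorder_def by blast
  have i0: "iV 0 = 0" using lin by (rule linear_0)
  have ineg: "iV (- u) = - iV u" for u using lin by (rule linear_neg)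
  have icomb: "iV (a *\<^sub>R u + b *\<^sub>R v) = a *\<^sub>R iV u + b *\<^sub>R iV v" for a b u v
    using lin by (simp add: linear_add linear_scale)
  have p1: "le 0 \<psi>1" and p2: "le 0 \<psi>2" using assms(2,3) unfolding B_plus_def by auto
  define C where "C = Omega_down iV le \<psi>1 \<psi>2"
  have Cdef: "v \<in> C \<longleftrightarrow> le 0 (iV v) \<and> le (iV v) \<psi>1 \<and> le (iV v) \<psi>2" for v
    unfolding C_def Omega_down_def by simp
  have C0: "0 \<in> C" using Cdef i0 p1 p2 lrefl by simp
  have posneg: "le 0 a \<longleftrightarrow> le (- a) 0" for a
  proof
    assume "le 0 a" from ladd[OF this, of "-a"] show "le (- a) 0" by simp
  next
    assume "le (-a) 0" from ladd[OF this, of "a"] show "le 0 a" by simp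
  qed
  have Ccl: "closed C"
    unfolding closed_sequential_limits
  proof (intro allI impI)
    fix u :: "nat \<Rightarrow> 'v" and l assume h: "(\<forall>n. u n \<in> C) \<and> u \<longlonglongrightarrow> l"
    have "le (iV l) \<psi>1" using h Cdef by (intro lim[of u]) auto
    moreover have "le (iV l) \<psi>2" using h Cdef by (intro lim[of u]) auto
    moreover have "le (iV (- l)) 0"
    proof (rule lim[of "\<lambda>n. - u n"])
      show "\<forall>i. le (iV (- u i)) 0" using h Cdef posneg ineg by auto
      show "(\<lambda>n. - u n) \<longlonglongrightarrow> - l" using h by (intro tendsto_minus) auto
    qed
    hence "le 0 (iV l)" using posneg ineg by simp
    ultimately show "l \<in> C" using Cdef by simp
  qed
  have Ccv: "convex C"
  proof (rule convexI)
    fix x y and a b :: real assume x: "x \<in> C" and y: "y \<in> C" and ab0: "0 \<le> a" "0 \<le> b" "a + b = 1"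
    have ab: "0 \<le> a \<and> 0 \<le> b \<and> a + b = 1" using ab0 by blast
    have up: "le (a *\<^sub>R iV x + b *\<^sub>R iV y) \<psi>" if "le (iV x) \<psi>" "le (iV y) \<psi>" for \<psi>
    proof -
      have "le (a *\<^sub>R iV x + b *\<^sub>R iV y) (a *\<^sub>R iV x + b *\<^sub>R \<psi>)" using ab that by (intro ladd lsc) auto
      moreover have "le (b *\<^sub>R \<psi> + a *\<^sub>R iV x) (b *\<^sub>R \<psi> + a *\<^sub>R \<psi>)" using ab that by (intro ladd lsc) auto
      hence "le (a *\<^sub>R iV x + b *\<^sub>R \<psi>) \<psi>" using ab
      proof -
        have "b *\<^sub>R \<psi> + a *\<^sub>R \<psi> = \<psi>" using ab by (simp flip: scaleR_add_left add: add.commute)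
        thus ?thesis using \<open>le (b *\<^sub>R \<psi> + a *\<^sub>R iV x) (b *\<^sub>R \<psi> + a *\<^sub>R \<psi>)\<close> by (simp add: add.commute)
      qed
      ultimately show ?thesis by (rule ltrans)
    qed
    have lo: "le 0 (a *\<^sub>R iV x + b *\<^sub>R iV y)"
    proof -
      have "le (a *\<^sub>R 0) (a *\<^sub>R iV x)" using ab x Cdef by (intro lsc) auto
      hence A: "le 0 (a *\<^sub>R iV x)" by simp
      have "le (a *\<^sub>R iV x + b *\<^sub>R 0) (a *\<^sub>R iV x + b *\<^sub>R iV y)" using ab y Cdef by (intro ladd lsc) auto
      hence "le (a *\<^sub>R iV x) (a *\<^sub>R iV x + b *\<^sub>R iV y)" by simp
      with A show ?thesis by (rule ltrans)
    qed
    show "a *\<^sub>R x + b *\<^sub>R y \<in> C" using up x y lo Cdef icomb by simp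
  qed
  define g where "g = gmax iV le \<psi>1 \<psi>2"
  define d where "d = (INF v\<in>C. norm (g - v))"
  have bddC: "bdd_below ((\<lambda>v. norm (g - v)) ` C)" by (rule bdd_belowI2[where m=0]) auto
  have low: "\<forall>v\<in>C. d \<le> norm (g - v)" unfolding d_def using cINF_lower[OF bddC] by blast
  obtain u where u: "u \<in> C" "norm (g - u) = d"
    using exists_nearest[OF refl _ Ccl Ccv, of g] C0 unfolding d_def by blast
  have "\<exists>!u. u \<in> C \<and> norm (g - u) = d"
  proof (rule ex1I[of _ u])
    show "u \<in> C \<and> norm (g - u) = d" using u by simp
    fix y assume "y \<in> C \<and> norm (g - y) = d"
    thus "y = u" using unique_nearest[OF sc Ccv _ _ u low] by blast
  qed
  thus ?thesis unfolding C_def g_def d_def .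
qed

end
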